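(* Let $X$ be a topological space. The following are equivalent: (a) $X$ is totally Lindelöf; (b) every $\omega$-closed filter base $\mathcal{F}$ on $X$ is contained in some total $\omega$-closed filter base $\mathcal{H}$ on $X$; (c) every $\delta$-stable filter base $\mathcal{F}$ on $X$ is contained in some total $\delta$-stable filter base $\mathcal{H}$ on $X$.
   Context: A filter base on $X$ is a nonempty $\mathcal{F}\subseteq\mathcal{P}(X)$ with $\emptyset\notin\mathcal{F}$ and closed under pairwise intersections. $\mathcal{F}$ is stable under countable intersections if for every countable $S\subseteq\mathcal{F}$ there is $H\in\mathcal{F}$ with $H\subseteq\bigcap S$; $\omega$-closed if $\bigcap S\in\mathcal{F}$ for every nonempty countable $S\subseteq\mathcal{F}$; $\delta$-stable if $\bigcap S\neq\emptyset$ for every countable $S\subseteq\mathcal{F}$. $ad(\mathcal{F})=\bigcap\{\overline{F}:F\in\mathcal{F}\}$. A filter base $\mathcal{F}$ is total if every filter base $\mathcal{H}\supseteq\mathcal{F}$ satisfies $ad(\mathcal{H})\neq\emptyset$. $X$ is totally Lindelöf if every filter base on $X$ stable under countable intersections is contained in a total filter base on $X$ stable under countable intersections. *)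

theory Defs
  imports "HOL-Analysis.Analysis"
begin

definition filter_base :: "'a topology \<Rightarrow> 'a set set \<Rightarrow> bool" where
  "filter_base X \<F> \<longleftrightarrow> \<F> \<noteq> {} \<and> \<F> \<subseteq> Pow (topspace X) \<and> {} \<notin> \<F> \<and>
     (\<forall>A\<in>\<F>. \<forall>B\<in>\<F>. A \<inter> B \<in> \<F>)"

text \<open>Intersections of families of subsets are taken inside the space
  (so the empty intersection is the whole space).\<close>

definition stable_countable_inter :: "'a topology \<Rightarrow> 'a set set \<Rightarrow> bool" where
  "stable_countable_inter X \<F> \<longleftrightarrow>
     (\<forall>S. countable S \<and> S \<subseteq> \<F> \<longrightarrow> (\<exists>H\<in>\<F>. H \<subseteq> topspace X \<inter> \<Inter>S))"

definition omega_closed :: "'a set set \<Rightarrow> bool" where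
  "omega_closed \<F> \<longleftrightarrow> (\<forall>S. countable S \<and> S \<noteq> {} \<and> S \<subseteq> \<F> \<longrightarrow> \<Inter>S \<in> \<F>)"

definition delta_stable :: "'a topology \<Rightarrow> 'a set set \<Rightarrow> bool" where
  "delta_stable X \<F> \<longleftrightarrow>
     (\<forall>S. countable S \<and> S \<subseteq> \<F> \<longrightarrow> topspace X \<inter> \<Inter>S \<noteq> {})"

definition adherence :: "'a topology \<Rightarrow> 'a set set \<Rightarrow> 'a set" where
  "adherence X \<F> = topspace X \<inter> \<Inter>{X closure_of F | F. F \<in> \<F>}"

definition total_fb :: "'a topology \<Rightarrow> 'a set set \<Rightarrow> bool" where
  "total_fb X \<F> \<longleftrightarrow> filter_base X \<F> \<and>
     (\<forall>\<H>. filter_base X \<H> \<and> \<F> \<subseteq> \<H> \<longrightarrow> adherence X \<H> \<noteq> {})"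

definition totally_lindelof :: "'a topology \<Rightarrow> bool" where
  "totally_lindelof X \<longleftrightarrow>
     (\<forall>\<F>. filter_base X \<F> \<and> stable_countable_inter X \<F> \<longrightarrow>
        (\<exists>\<H>. \<F> \<subseteq> \<H> \<and> filter_base X \<H> \<and> total_fb X \<H> \<and> stable_countable_inter X \<H>))"

end

theory Submission
  imports Defs
begin

definition omg :: "'a set set \<Rightarrow> 'a set set" where
  "omg F = {\<Inter>S | S. countable S \<and> S \<noteq> {} \<and> S \<subseteq> F}"

lemma omg_sup: "F \<subseteq> omg F"
  unfolding omg_def by (auto intro!: exI[of _ "{_}"])

lemma omg_fb:
  assumes "filter_base X F" "delta_stable X F"
  shows "filter_base X (omg F)"
proof -
  have a: "F \<noteq> {}" "F \<subseteq> Pow (topspace X)" "{} \<notin> F"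
    using assms(1) unfolding filter_base_def by auto
  have "omg F \<noteq> {}" using a(1) omg_sup by blast
  moreover have "omg F \<subseteq> Pow (topspace X)"
    using a(2) unfolding omg_def by blast
  moreover have "{} \<notin> omg F"
  proof
    assume "{} \<in> omg F"
    then obtain S where S: "countable S" "S \<noteq> {}" "S \<subseteq> F" "\<Inter>S = {}"
      unfolding omg_def by auto
    then show False using assms(2) unfolding delta_stable_def by auto
  qed
  moreover have "\<forall>A\<in>omg F. \<forall>B\<in>omg F. A \<inter> B \<in> omg F"
  proof (intro ballI)
    fix A B assume "A \<in> omg F" "B \<in> omg F"
    then obtain S T where "countable S" "S \<noteq> {}" "S \<subseteq> F" "A = \<Inter>S"
      "countable T" "T \<noteq> {}" "T \<subseteq> F" "B = \<Inter>T"
      unfolding omg_def by auto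
    then show "A \<inter> B \<in> omg F" unfolding omg_def
      by (auto intro!: exI[of _ "S \<union> T"])
  qed
  ultimately show ?thesis unfolding filter_base_def by blast
qed

lemma omg_closed: "omega_closed (omg F)"
  unfolding omega_closed_def
proof (intro allI impI)
  fix S assume S: "countable S \<and> S \<noteq> {} \<and> S \<subseteq> omg F"
  then have "\<forall>A\<in>S. \<exists>T. countable T \<and> T \<noteq> {} \<and> T \<subseteq> F \<and> A = \<Inter>T"
    unfolding omg_def by blast
  then have ex: "\<forall>A\<in>S. \<exists>T. countable T \<and> T \<noteq> {} \<and> T \<subseteq> F \<and> A = \<Inter>T" .
  obtain f where f: "\<forall>A\<in>S. countable (f A) \<and> f A \<noteq> {} \<and> f A \<subseteq> F \<and> A = \<Inter>(f A)"
    using bchoice[OF ex] by blast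
  have "\<Inter>S = \<Inter>(\<Union>(f ` S))"
  proof (rule set_eqI, rule iffI)
    fix x assume "x \<in> \<Inter>S" then show "x \<in> \<Inter>(\<Union>(f ` S))" using f by auto
  next
    fix x assume x: "x \<in> \<Inter>(\<Union>(f ` S))"
    show "x \<in> \<Inter>S"
    proof
      fix A assume A: "A \<in> S"
      then have "x \<in> \<Inter>(f A)" using x by auto
      moreover have "A = \<Inter>(f A)" using f A by blast
      ultimately show "x \<in> A" by simp
    qed
  qed
  moreover have "countable (\<Union>(f ` S))" using f S by (intro countable_UN) auto
  moreover have "\<Union>(f ` S) \<noteq> {}" using f S by auto
  moreover have "\<Union>(f ` S) \<subseteq> F" using f by auto
  ultimately show "\<Inter>S \<in> omg F" unfolding omg_def by blast
qed

lemma fbD: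
  assumes "filter_base X F"
  shows "F \<noteq> {}" "F \<subseteq> Pow (topspace X)" "{} \<notin> F" "A \<in> F \<Longrightarrow> B \<in> F \<Longrightarrow> A \<inter> B \<in> F"
  using assms unfolding filter_base_def by simp_all

lemma oc_stable:
  assumes "filter_base X F" "omega_closed F"
  shows "stable_countable_inter X F"
  unfolding stable_countable_inter_def
proof (intro allI impI)
  fix S assume S: "countable S \<and> S \<subseteq> F"
  show "\<exists>H\<in>F. H \<subseteq> topspace X \<inter> \<Inter>S"
  proof (cases "S = {}")
    case True
    obtain A where "A \<in> F" using fbD(1)[OF assms(1)] by blast
    moreover have "A \<subseteq> topspace X" using \<open>A \<in> F\<close> fbD(2)[OF assms(1)] by blast
    ultimately show ?thesis using True by blast
  next
    case False
    then have "\<Inter>S \<in> F" using S assms(2) unfolding omega_closed_def by blast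
    moreover have "\<Inter>S \<subseteq> topspace X" using \<open>\<Inter>S \<in> F\<close> fbD(2)[OF assms(1)] by blast
    ultimately show ?thesis by blast
  qed
qed

lemma stable_delta:
  assumes "filter_base X F" "stable_countable_inter X F"
  shows "delta_stable X F"
  unfolding delta_stable_def
proof (intro allI impI)
  fix S assume "countable S \<and> S \<subseteq> F"
  then obtain H where "H \<in> F" "H \<subseteq> topspace X \<inter> \<Inter>S"
    using assms(2) unfolding stable_countable_inter_def by blast
  moreover have "H \<noteq> {}" using \<open>H \<in> F\<close> fbD(3)[OF assms(1)] by blast
  ultimately show "topspace X \<inter> \<Inter>S \<noteq> {}" by blast
qed

lemma total_up:
  assumes "total_fb X H" "H \<subseteq> G" "filter_base X G"
  shows "total_fb X G"
  using assms unfolding total_fb_def by blast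

theorem proposition1p2:
  fixes X :: "'a topology"
  shows "(totally_lindelof X \<longleftrightarrow>
           (\<forall>\<F>. filter_base X \<F> \<and> omega_closed \<F> \<longrightarrow>
              (\<exists>\<H>. \<F> \<subseteq> \<H> \<and> filter_base X \<H> \<and> total_fb X \<H> \<and> omega_closed \<H>))) \<and>
         (totally_lindelof X \<longleftrightarrow>
           (\<forall>\<F>. filter_base X \<F> \<and> delta_stable X \<F> \<longrightarrow>
              (\<exists>\<H>. \<F> \<subseteq> \<H> \<and> filter_base X \<H> \<and> total_fb X \<H> \<and> delta_stable X \<H>)))"
proof -
  have ofb: "filter_base X (omg F)" if "filter_base X F" "delta_stable X F" for F
    using omg_fb that .
  have sd: "delta_stable X F" if "filter_base X F" "stable_countable_inter X F" for F
    using stable_delta that .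
  have os: "stable_countable_inter X F" if "filter_base X F" "omega_closed F" for F
    using oc_stable that .
  have ab: "totally_lindelof X \<longleftrightarrow>
           (\<forall>\<F>. filter_base X \<F> \<and> omega_closed \<F> \<longrightarrow>
              (\<exists>\<H>. \<F> \<subseteq> \<H> \<and> filter_base X \<H> \<and> total_fb X \<H> \<and> omega_closed \<H>))"
  proof
    assume L: "totally_lindelof X"
    show "\<forall>\<F>. filter_base X \<F> \<and> omega_closed \<F> \<longrightarrow>
              (\<exists>\<H>. \<F> \<subseteq> \<H> \<and> filter_base X \<H> \<and> total_fb X \<H> \<and> omega_closed \<H>)"
    proof (intro allI impI)
      fix F assume F: "filter_base X F \<and> omega_closed F"
      then obtain H where H: "F \<subseteq> H" "filter_base X H" "total_fb X H" "stable_countable_inter X H"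
        using L os unfolding totally_lindelof_def by blast
      have "filter_base X (omg H)" using ofb sd H by blast
      then show "\<exists>\<H>. F \<subseteq> \<H> \<and> filter_base X \<H> \<and> total_fb X \<H> \<and> omega_closed \<H>"
        using H omg_sup[of H] omg_closed[of H] total_up[of X H "omg H"]
        by (intro exI[of _ "omg H"]) blast
    qed
  next
    assume B: "\<forall>\<F>. filter_base X \<F> \<and> omega_closed \<F> \<longrightarrow>
              (\<exists>\<H>. \<F> \<subseteq> \<H> \<and> filter_base X \<H> \<and> total_fb X \<H> \<and> omega_closed \<H>)"
    show "totally_lindelof X" unfolding totally_lindelof_def
    proof (intro allI impI)
      fix F assume F: "filter_base X F \<and> stable_countable_inter X F"
      then have "filter_base X (omg F)" using ofb sd by blast
      then obtain H where H: "omg F \<subseteq> H" "filter_base X H" "total_fb X H" "omega_closed H"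
        using B omg_closed[of F] by blast
      then show "\<exists>H. F \<subseteq> H \<and> filter_base X H \<and> total_fb X H \<and> stable_countable_inter X H"
        using omg_sup[of F] os by blast
    qed
  qed
  have ac: "totally_lindelof X \<longleftrightarrow>
           (\<forall>\<F>. filter_base X \<F> \<and> delta_stable X \<F> \<longrightarrow>
              (\<exists>\<H>. \<F> \<subseteq> \<H> \<and> filter_base X \<H> \<and> total_fb X \<H> \<and> delta_stable X \<H>))"
  proof
    assume L: "totally_lindelof X"
    show "\<forall>\<F>. filter_base X \<F> \<and> delta_stable X \<F> \<longrightarrow>
              (\<exists>\<H>. \<F> \<subseteq> \<H> \<and> filter_base X \<H> \<and> total_fb X \<H> \<and> delta_stable X \<H>)"
    proof (intro allI impI)
      fix F assume F: "filter_base X F \<and> delta_stable X F"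
      then have "filter_base X (omg F)" using ofb by blast
      then have "stable_countable_inter X (omg F)" using os omg_closed by blast
      then obtain H where H: "omg F \<subseteq> H" "filter_base X H" "total_fb X H" "stable_countable_inter X H"
        using L \<open>filter_base X (omg F)\<close> unfolding totally_lindelof_def by blast
      then show "\<exists>\<H>. F \<subseteq> \<H> \<and> filter_base X \<H> \<and> total_fb X \<H> \<and> delta_stable X \<H>"
        using omg_sup[of F] sd by blast
    qed
  next
    assume C: "\<forall>\<F>. filter_base X \<F> \<and> delta_stable X \<F> \<longrightarrow>
              (\<exists>\<H>. \<F> \<subseteq> \<H> \<and> filter_base X \<H> \<and> total_fb X \<H> \<and> delta_stable X \<H>)"
    show "totally_lindelof X" unfolding totally_lindelof_def
    proof (intro allI impI)
      fix F assume F: "filter_base X F \<and> stable_countable_inter X F"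
      then obtain H where H: "F \<subseteq> H" "filter_base X H" "total_fb X H" "delta_stable X H"
        using C sd by blast
      have fo: "filter_base X (omg H)" using ofb H by blast
      have "stable_countable_inter X (omg H)" using os fo omg_closed by blast
      moreover have "total_fb X (omg H)" using total_up[OF H(3) omg_sup fo] .
      ultimately show "\<exists>H. F \<subseteq> H \<and> filter_base X H \<and> total_fb X H \<and> stable_countable_inter X H"
        using H(1) omg_sup[of H] fo by blast
    qed
  qed
  show ?thesis using ab ac by blast
qed

end
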